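(* Let $k$ be a field and $\mu=\nu=(4,2)$. Then the matrix problem $\mathcal{P}_k(\mu,\nu)$ has at least $|k^\times|$ orbits; in particular it has infinitely many orbits whenever $k$ is infinite (i.e. it is of infinite type).
   Context: For partitions $\mu$ of $m$ and $\nu$ of $n$ and a field $k$, the matrix problem $\mathcal{P}_k(\mu,\nu)$ is the action of the group $C_{GL_m(k)}(J_\mu(0)) \times C_{GL_n(k)}(J_\nu(0))$ on the quotient space $Q = M_{m,n}(k)/\{wJ_\nu(0) - J_\mu(0)w : w\in M_{m,n}(k)\}$ given by $(X,Y)\cdot[v] = [XvY^{-1}]$. Here $J_r(0)$ is the $r\times r$ matrix with $1$ in each $(i+1,i)$ entry and $0$ elsewhere, and $J_\mu(0) = \bigoplus_i J_{\mu_i}(0)$. (Equivalently, $Q$ is the space of $s\times t$ matrices with $(i,j)$ entry in $k[x]/(x^{\min(\mu_i,\nu_j)})$, acted on by the unit groups of $k[x]_\mu$ and $k[x]_\nu$.) *)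

theory Defs
  imports "Jordan_Normal_Form.Matrix"
begin

definition nilJ :: "nat \<Rightarrow> 'a::{zero,one} mat" where
  "nilJ r = mat r r (\<lambda>(i,j). if i = Suc j then 1 else 0)"

definition Jpart :: "nat list \<Rightarrow> 'a::{zero,one} mat" where
  "Jpart mu = diag_block_mat (map nilJ mu)"

definition centralizer_GL :: "nat \<Rightarrow> 'a::comm_ring_1 mat \<Rightarrow> 'a mat set" where
  "centralizer_GL n A = {X \<in> carrier_mat n n. invertible_mat X \<and> X * A = A * X}"

definition comm_space :: "nat list \<Rightarrow> nat list \<Rightarrow> 'a::comm_ring_1 mat set" where
  "comm_space mu nu =
     {w * Jpart nu - Jpart mu * w | w. w \<in> carrier_mat (sum_list mu) (sum_list nu)}"

text \<open>Orbit relation of P_k(mu,nu), lifted to representatives v in M_{m,n}(k):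
  [v'] lies in the orbit of [v] iff [v'] = [X v Y^{-1}] for X, Y in the centralizers.\<close>
definition P_orbit_rel :: "nat list \<Rightarrow> nat list \<Rightarrow> ('a::comm_ring_1 mat \<times> 'a mat) set" where
  "P_orbit_rel mu nu =
     {(v, v'). v \<in> carrier_mat (sum_list mu) (sum_list nu) \<and>
               v' \<in> carrier_mat (sum_list mu) (sum_list nu) \<and>
               (\<exists>X Y Yinv. X \<in> centralizer_GL (sum_list mu) (Jpart mu) \<and>
                           Y \<in> centralizer_GL (sum_list nu) (Jpart nu) \<and>
                           Yinv \<in> carrier_mat (sum_list nu) (sum_list nu) \<and>
                           Y * Yinv = 1\<^sub>m (sum_list nu) \<and>
                           X * v * Yinv - v' \<in> comm_space mu nu)}"

definition P_orbits :: "nat list \<Rightarrow> nat list \<Rightarrow> 'a::comm_ring_1 mat set set" where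
  "P_orbits mu nu = carrier_mat (sum_list mu) (sum_list nu) // P_orbit_rel mu nu"

end

theory Submission
  imports Defs "Jordan_Normal_Form.Determinant"
begin

definition Jm :: "'a::{zero,one} mat" where
  "Jm = mat 6 6 (\<lambda>(i,j). if i = Suc j \<and> j \<noteq> 3 then 1 else 0)"

lemma J6: "(Jpart [4,2] :: 'a::{zero,one} mat) = Jm"
  unfolding Jm_def
proof (rule eq_matI)
  fix i j assume "i < dim_row (mat 6 6 (\<lambda>(i,j). if i = Suc j \<and> j \<noteq> 3 then (1::'a) else 0))"
     "j < dim_col (mat 6 6 (\<lambda>(i,j). if i = Suc j \<and> j \<noteq> 3 then (1::'a) else 0))"
  then have "i < 6" "j < 6" by auto
  then show "Jpart [4,2] $$ (i,j) = mat 6 6 (\<lambda>(i,j). if i = Suc j \<and> j \<noteq> 3 then (1::'a) else 0) $$ (i,j)"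
    unfolding Jpart_def nilJ_def by (auto simp: Let_def)
qed (auto simp: Jpart_def nilJ_def Let_def)

lemma Jm_carrier: "Jm \<in> carrier_mat 6 6" by (simp add: Jm_def)
lemma Jm_dims[simp]: "dim_row Jm = 6" "dim_col Jm = 6" by (simp_all add: Jm_def)

lemma sum6: "(\<Sum>k\<in>{0..<6::nat}. f k) = f 0 + f 1 + f 2 + f 3 + f 4 + (f 5::'a::comm_monoid_add)"
  by (simp add: eval_nat_numeral atLeast0_lessThan_Suc add_ac)

lemma XJ: assumes "(X::'a::comm_ring_1 mat) \<in> carrier_mat 6 6" "i<6" "j<6"
  shows "(X*Jm)$$(i,j) = (if j<5 \<and> j\<noteq>3 then X$$(i,Suc j) else 0)"
  using assms by (auto simp: Jm_def scalar_prod_def sum6 less_Suc_eq eval_nat_numeral)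

lemma JX: assumes "(X::'a::comm_ring_1 mat) \<in> carrier_mat 6 6" "i<6" "j<6"
  shows "(Jm*X)$$(i,j) = (if 0<i \<and> i\<noteq>4 then X$$(i-1,j) else 0)"
  using assms by (auto simp: Jm_def scalar_prod_def sum6 less_Suc_eq eval_nat_numeral)

lemma struct:
  assumes X: "(X::'a::comm_ring_1 mat) \<in> carrier_mat 6 6" and c: "X * Jm = Jm * X"
  shows "X$$(1,1) = X$$(0,0)" "X$$(2,2) = X$$(0,0)" "X$$(5,5) = X$$(4,4)"
    "X$$(1,4) = 0" "X$$(4,1) = 0" "X$$(5,2) = 0" "X$$(2,5) = 0"
    "X$$(0,1) = 0" "X$$(0,2) = 0" "X$$(0,3) = 0" "X$$(0,4) = 0" "X$$(0,5) = 0"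
proof -
  have e: "\<And>i j. i<6 \<Longrightarrow> j<6 \<Longrightarrow> (if j<5 \<and> j\<noteq>3 then X$$(i,Suc j) else 0) = (if 0<i \<and> i\<noteq>4 then X$$(i-1,j) else 0)"
    using XJ[OF X] JX[OF X] c by metis
  note E = e[of 0 0] e[of 0 1] e[of 0 2] e[of 0 3] e[of 0 4] e[of 0 5] e[of 1 0] e[of 1 1] e[of 1 2] e[of 1 3] e[of 1 4] e[of 1 5] e[of 2 0] e[of 2 1] e[of 2 2] e[of 2 3] e[of 2 4] e[of 2 5] e[of 3 0] e[of 3 1] e[of 3 2] e[of 3 3] e[of 3 4] e[of 3 5] e[of 4 0] e[of 4 1] e[of 4 2] e[of 4 3] e[of 4 4] e[of 4 5] e[of 5 0] e[of 5 1] e[of 5 2] e[of 5 3] e[of 5 4] e[of 5 5]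
  show "X$$(1,1) = X$$(0,0)" "X$$(2,2) = X$$(0,0)" "X$$(5,5) = X$$(4,4)"
    "X$$(1,4) = 0" "X$$(4,1) = 0" "X$$(5,2) = 0" "X$$(2,5) = 0"
    "X$$(0,1) = 0" "X$$(0,2) = 0" "X$$(0,3) = 0" "X$$(0,4) = 0" "X$$(0,5) = 0"
    using E by (simp_all add: numeral_eq_Suc)
qed

definition vv :: "'a::field \<Rightarrow> 'a mat" where
  "vv l = mat 6 6 (\<lambda>(i,j). if (i=0 \<and> j=1) \<or> (i=0 \<and> j=4) \<or> (i=4 \<and> j=2) then 1
                          else if i=4 \<and> j=5 then l else 0)"

lemma vv_carrier: "vv l \<in> carrier_mat 6 6" by (simp add: vv_def)

lemma Xv: assumes "X \<in> carrier_mat 6 6" "i<6" "j<6"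
  shows "(X * vv l)$$(i,j) = (if j=1 \<or> j=4 then X$$(i,0) else if j=2 then X$$(i,4)
      else if j=5 then l * X$$(i,4) else 0)"
  using assms by (auto simp: vv_def scalar_prod_def sum6 less_Suc_eq eval_nat_numeral)

lemma vY: assumes "Y \<in> carrier_mat 6 6" "i<6" "j<6"
  shows "(vv m * Y)$$(i,j) = (if i=0 then Y$$(1,j) + Y$$(4,j) else if i=4 then Y$$(2,j) + m * Y$$(5,j) else 0)"
  using assms by (auto simp: vv_def scalar_prod_def sum6 less_Suc_eq eval_nat_numeral)

lemma sl: "sum_list [4,2::nat] = 6" by simp

lemma key:
  assumes "(vv l, vv m) \<in> P_orbit_rel [4,2] [4,2]"
  shows "l = m"
proof -
  from assms obtain X Y Yinv w where
    X: "X \<in> carrier_mat 6 6" and Xi: "invertible_mat X" and XJc: "X * Jm = Jm * X" and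
    Y: "Y \<in> carrier_mat 6 6" and YJc: "Y * Jm = Jm * Y" and
    Yi: "Yinv \<in> carrier_mat 6 6" and YY: "Y * Yinv = 1\<^sub>m 6" and
    w: "w \<in> carrier_mat 6 6" and H: "X * vv l * Yinv - vv m = w * Jm - Jm * w"
    unfolding P_orbit_rel_def centralizer_GL_def comm_space_def sl J6 by blast
  have YiY: "Yinv * Y = 1\<^sub>m 6" using mat_mult_left_right_inverse[OF Y Yi YY] .
  have V: "vv l \<in> carrier_mat 6 6" "vv m \<in> carrier_mat 6 6" by (rule vv_carrier)+
  note J = Jm_carrier
  have "(X * vv l * Yinv - vv m) * Y = X * vv l - vv m * Y"
  proof -
    have "(X * vv l * Yinv - vv m) * Y = X * vv l * Yinv * Y - vv m * Y"
      by (rule minus_mult_distrib_mat[where n=6 and nr=6 and nc=6]) (use X V Yi Y in auto)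
    also have "X * vv l * Yinv * Y = X * vv l * (Yinv * Y)"
      using X V Yi Y by (meson assoc_mult_mat mult_carrier_mat)
    also have "\<dots> = X * vv l" using YiY X V by simp
    finally show ?thesis .
  qed
  moreover have "(w * Jm - Jm * w) * Y = (w * Y) * Jm - Jm * (w * Y)"
  proof -
    have "(w * Jm - Jm * w) * Y = w * Jm * Y - Jm * w * Y"
      by (rule minus_mult_distrib_mat[where n=6 and nr=6 and nc=6]) (use w J Y in \<open>auto intro: mult_carrier_mat\<close>)
    also have "w * Jm * Y = (w * Y) * Jm" using w J Y YJc
      by (metis assoc_mult_mat)
    also have "Jm * w * Y = Jm * (w * Y)" using w J Y by (meson assoc_mult_mat)
    finally show ?thesis .
  qed
  ultimately have M: "X * vv l - vv m * Y = (w * Y) * Jm - Jm * (w * Y)" using H by simp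
  define W where "W = w * Y"
  have Wc: "W \<in> carrier_mat 6 6" using w Y W_def by simp
  have ent: "\<And>i j. i<6 \<Longrightarrow> j<6 \<Longrightarrow> (X * vv l)$$(i,j) - (vv m * Y)$$(i,j) = (W*Jm)$$(i,j) - (Jm*W)$$(i,j)"
  proof -
    fix i j assume ij: "i<(6::nat)" "j<(6::nat)"
    have "(X * vv l - vv m * Y)$$(i,j) = ((w * Y) * Jm - Jm * (w * Y))$$(i,j)" using M by simp
    then show "(X * vv l)$$(i,j) - (vv m * Y)$$(i,j) = (W*Jm)$$(i,j) - (Jm*W)$$(i,j)"
      using ij X V Y Wc J unfolding W_def[symmetric] by simp
  qed
  have f: "\<And>i j. i<6 \<Longrightarrow> j<6 \<Longrightarrow> (if j=1 \<or> j=4 then X$$(i,0) else if j=2 then X$$(i,4)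
      else if j=5 then l * X$$(i,4) else 0) - (if i=0 then Y$$(1,j) + Y$$(4,j) else if i=4 then Y$$(2,j) + m * Y$$(5,j) else 0)
      = (if j<5 \<and> j\<noteq>3 then W$$(i,Suc j) else 0) - (if 0<i \<and> i\<noteq>4 then W$$(i-1,j) else 0)"
  proof -
    fix i j assume ij: "i<(6::nat)" "j<(6::nat)"
    show "?thesis i j" using ent[OF ij] unfolding Xv[OF X ij] vY[OF Y ij] XJ[OF Wc ij] JX[OF Wc ij] .
  qed
  have f01: "X$$(0,0) - (Y$$(1,1) + Y$$(4,1)) = W$$(0,2) - 0" using f[of 0 1] by (simp add: numeral_eq_Suc)
  have f12: "X$$(1,4) - 0 = W$$(1,3) - W$$(0,2)" using f[of 1 2] by (simp add: numeral_eq_Suc)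
  have f23: "0 - 0 = 0 - W$$(1,3)" using f[of 2 3] by (simp add: numeral_eq_Suc)
  have f04: "X$$(0,0) - (Y$$(1,4) + Y$$(4,4)) = W$$(0,5) - 0" using f[of 0 4] by (simp add: numeral_eq_Suc)
  have f15: "l * X$$(1,4) - 0 = 0 - W$$(0,5)" using f[of 1 5] by (simp add: numeral_eq_Suc)
  have f42: "X$$(4,4) - (Y$$(2,2) + m * Y$$(5,2)) = W$$(4,3) - 0" using f[of 4 2] by (simp add: numeral_eq_Suc)
  have f53: "0 - 0 = 0 - W$$(4,3)" using f[of 5 3] by (simp add: numeral_eq_Suc)
  have f45: "l * X$$(4,4) - (Y$$(2,5) + m * Y$$(5,5)) = 0 - 0" using f[of 4 5] by (simp add: numeral_eq_Suc)
  note SX = struct[OF X XJc] and SY = struct[OF Y YJc]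
  have F': "X$$(0,0) - (Y$$(1,1) + Y$$(4,1)) + X$$(1,4) = 0"
           "X$$(0,0) - (Y$$(1,4) + Y$$(4,4)) + l * X$$(1,4) = 0"
           "X$$(4,4) - (Y$$(2,2) + m * Y$$(5,2)) = 0"
           "l * X$$(4,4) - (Y$$(2,5) + m * Y$$(5,5)) = 0"
  proof -
    show "X$$(0,0) - (Y$$(1,1) + Y$$(4,1)) + X$$(1,4) = 0"
    proof -
      have "X$$(0,0) - (Y$$(1,1) + Y$$(4,1)) + X$$(1,4) = (W$$(0,2) - 0) + (W$$(1,3) - W$$(0,2))"
        using f01 f12 by simp
      then show ?thesis using f23 by simp
    qed
    show "X$$(0,0) - (Y$$(1,4) + Y$$(4,4)) + l * X$$(1,4) = 0"
    proof -
      have "X$$(0,0) - (Y$$(1,4) + Y$$(4,4)) + l * X$$(1,4) = (W$$(0,5) - 0) + (0 - W$$(0,5))"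
        using f04 f15 by simp
      then show ?thesis by simp
    qed
    show "X$$(4,4) - (Y$$(2,2) + m * Y$$(5,2)) = 0" using f42 f53 by simp
    show "l * X$$(4,4) - (Y$$(2,5) + m * Y$$(5,5)) = 0" using f45 by simp
  qed
  have a: "X$$(0,0) \<noteq> 0"
  proof
    assume a0: "X$$(0,0) = 0"
    from Xi obtain B where XB0: "X * B = 1\<^sub>m (dim_row X)" "B * X = 1\<^sub>m (dim_row B)"
      unfolding invertible_mat_def inverts_mat_def by blast
    have d1: "dim_col B = 6" using arg_cong[OF XB0(1), of dim_col] X by simp
    have d2: "dim_row B = 6" using arg_cong[OF XB0(2), of dim_col] X by simp
    have XB: "X * B = 1\<^sub>m 6" "B \<in> carrier_mat 6 6" using XB0(1) X d1 d2 by auto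
    have "(X * B)$$(0,0) = 1" using XB by simp
    moreover have "(X * B)$$(0,0) = (\<Sum>k\<in>{0..<6}. X$$(0,k) * B$$(k,0))"
      using X XB(2) by (simp add: scalar_prod_def)
    moreover have "(\<Sum>k\<in>{0..<6}. X$$(0,k) * B$$(k,0)) = 0"
      unfolding sum6 using a0 SX by simp
    ultimately show False by simp
  qed
  have e1: "X$$(0,0) = Y$$(0,0)" using F'(1) SX SY by simp
  have e2: "X$$(0,0) = Y$$(4,4)" using F'(2) SX SY by simp
  have e3: "X$$(4,4) = Y$$(0,0)" using F'(3) SX SY by simp
  have e4: "l * X$$(4,4) = m * Y$$(4,4)" using F'(4) SX SY by simp
  from e1 e2 e3 e4 a show "l = m" by simp
qed

lemma refl_vv: "(vv l, vv l) \<in> P_orbit_rel [4,2] [4,2]"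
proof -
  have c: "(1\<^sub>m 6 :: 'a mat) \<in> centralizer_GL 6 Jm"
    unfolding centralizer_GL_def invertible_mat_def inverts_mat_def square_mat.simps
    using Jm_carrier by (auto intro!: exI[of _ "1\<^sub>m 6"])
  have e0: "vv l - vv l = (0\<^sub>m 6 6 :: 'a mat) * Jm - Jm * 0\<^sub>m 6 6"
    using vv_carrier[of l] Jm_carrier by (intro eq_matI) auto
  have e1: "1\<^sub>m 6 * vv l * 1\<^sub>m 6 = vv l" using vv_carrier[of l] by simp
  have "1\<^sub>m 6 * vv l * 1\<^sub>m 6 - vv l = (0\<^sub>m 6 6 :: 'a mat) * Jm - Jm * 0\<^sub>m 6 6"
    unfolding e1 by (rule e0)
  then have "1\<^sub>m 6 * vv l * 1\<^sub>m 6 - vv l \<in> comm_space [4,2] [4,2]"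
    unfolding comm_space_def sl J6 by (intro CollectI exI[of _ "0\<^sub>m 6 6"] conjI) (assumption, simp)
  then have "vv l \<in> carrier_mat 6 6 \<and> vv l \<in> carrier_mat 6 6 \<and>
     (\<exists>X Y Yinv. X \<in> centralizer_GL 6 Jm \<and> Y \<in> centralizer_GL 6 Jm \<and>
        Yinv \<in> carrier_mat 6 6 \<and> Y * Yinv = 1\<^sub>m 6 \<and> X * vv l * Yinv - vv l \<in> comm_space [4,2] [4,2])"
    using c vv_carrier[of l]
    by (intro conjI exI[of _ "1\<^sub>m 6"]) (simp_all only:, simp, simp)
  then show ?thesis unfolding P_orbit_rel_def sl J6 by (simp only: mem_Collect_eq case_prod_conv)
qed

theorem mainTheorem7:
  shows "(\<exists>f :: 'k::field \<Rightarrow> 'k mat set.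
            inj_on f (UNIV - {0}) \<and> f ` (UNIV - {0}) \<subseteq> P_orbits [4,2] [4,2])
         \<and> (infinite (UNIV :: 'k set) \<longrightarrow> infinite (P_orbits [4,2] [4,2] :: 'k mat set set))"
proof -
  define f :: "'k \<Rightarrow> 'k mat set" where "f = (\<lambda>l. P_orbit_rel [4,2] [4,2] `` {vv l})"
  have inj: "inj_on f (UNIV - {0})"
  proof (rule inj_onI)
    fix l m :: 'k assume "f l = f m"
    then have "vv m \<in> P_orbit_rel [4,2] [4,2] `` {vv l}" using refl_vv[of m] unfolding f_def by auto
    then show "l = m" using key by auto
  qed
  have sub: "f ` (UNIV - {0}) \<subseteq> P_orbits [4,2] [4,2]"
    unfolding f_def P_orbits_def sl using vv_carrier by (auto intro: quotientI)
  have "infinite (UNIV :: 'k set) \<longrightarrow> infinite (P_orbits [4,2] [4,2] :: 'k mat set set)"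
  proof
    assume "infinite (UNIV :: 'k set)"
    then have "infinite (UNIV - {0::'k})" by simp
    then have "infinite (f ` (UNIV - {0}))" using inj finite_imageD by blast
    then show "infinite (P_orbits [4,2] [4,2] :: 'k mat set set)" using sub finite_subset by blast
  qed
  then show ?thesis using inj sub by blast
qed

end
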